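(* Let $w\in\{a,\alpha\}^*$ be such that $\varphi_w$ is primitive, let $\mathbf{u}$ be a fixed point of $\varphi_w$, and let $p\neq\varepsilon$ be a prefix of $\mathbf{u}$. Then the derived word $\mathbf{d}_{\mathbf{u}}(p)$ is fixed by a substitution from $C(F(w))\cup C(H(w))$, where $C(x) = \{\varphi_v : v=\mathrm{cyc}^k(x),\ k\in\mathbb{N}\}$.
   Context: Morphisms on $\{0,1\}^*$: $\varphi_a: 0\mapsto 0, 1 \mapsto 10$; $\varphi_b: 0 \mapsto 0, 1\mapsto 01$; $\varphi_\alpha: 0\mapsto 01, 1\mapsto 1$; $\varphi_\beta: 0\mapsto 10, 1 \mapsto 1$; for $w=w_0\cdots w_{m-1}$, $\varphi_w = \varphi_{w_0}\circ\cdots\circ\varphi_{w_{m-1}}$. $\mathrm{cyc}(u_0u_1\cdots u_{n-1}) = u_1\cdots u_{n-1}u_0$. $H, F$ are monoid morphisms on $\{a,b,\alpha,\beta\}^*$: $H(a)=H(b)=b$, $H(\alpha)=\alpha$, $H(\beta)=\beta$; $F(a)=a$, $F(b)=b$, $F(\alpha)=F(\beta)=\beta$. A morphism is primitive if some power maps every letter to a word containing every letter. Derived word: for a uniformly recurrent word $\mathbf{u}$ and factor $v$, a return word of $v$ is a factor $r$ such that $rv$ is a factor in which $v$ occurs exactly twice (as prefix and suffix); with $r_0,\dots,r_k$ all return words and $\mathbf{u}=p'\,r_{s_0}r_{s_1}\cdots$, $|p'|$ the first occurrence of $v$, $\mathbf{d}_{\mathbf{u}}(v)=s_0s_1\cdots$,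 up to permutation of letters. *)

theory Defs
  imports Main "HOL-Library.Infinite_Set"
begin

datatype gen = GA | GB | GAl | GBe

fun phi_gen :: "gen \<Rightarrow> nat \<Rightarrow> nat list" where
  "phi_gen GA c = (if c = 0 then [0] else [1,0])"
| "phi_gen GB c = (if c = 0 then [0] else [0,1])"
| "phi_gen GAl c = (if c = 0 then [0,1] else [1])"
| "phi_gen GBe c = (if c = 0 then [1,0] else [1])"

definition morph :: "(nat \<Rightarrow> nat list) \<Rightarrow> nat list \<Rightarrow> nat list" where
  "morph f xs = concat (map f xs)"

fun phi_word :: "gen list \<Rightarrow> nat \<Rightarrow> nat list" where
  "phi_word [] c = [c]"
| "phi_word (g # ws) c = morph (phi_gen g) (phi_word ws c)"

definition H :: "gen \<Rightarrow> gen" where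
  "H g = (case g of GA \<Rightarrow> GB | GB \<Rightarrow> GB | GAl \<Rightarrow> GAl | GBe \<Rightarrow> GBe)"

definition F :: "gen \<Rightarrow> gen" where
  "F g = (case g of GA \<Rightarrow> GA | GB \<Rightarrow> GB | GAl \<Rightarrow> GBe | GBe \<Rightarrow> GBe)"

definition cyc :: "'a list \<Rightarrow> 'a list" where
  "cyc xs = rotate1 xs"

definition primitive :: "(nat \<Rightarrow> nat list) \<Rightarrow> bool" where
  "primitive f \<longleftrightarrow> (\<exists>k>0. \<forall>c\<in>{0,1::nat}. \<forall>d\<in>{0,1::nat}.
      d \<in> set (((morph f) ^^ k) [c]))"

definition pref :: "(nat \<Rightarrow> 'a) \<Rightarrow> nat \<Rightarrow> 'a list" where
  "pref u n = map u [0..<n]"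

text \<open>u is a fixed point of the (non-erasing) morphism f on {0,1}^N:
  u is binary and f(u) = u, i.e. every f(u_0...u_{n-1}) is a prefix of u.\<close>
definition fixed_point :: "(nat \<Rightarrow> nat list) \<Rightarrow> (nat \<Rightarrow> nat) \<Rightarrow> bool" where
  "fixed_point f u \<longleftrightarrow> range u \<subseteq> {0,1} \<and>
     (\<forall>n. let v = morph f (pref u n) in v = pref u (length v))"

definition occurrences :: "(nat \<Rightarrow> nat) \<Rightarrow> nat list \<Rightarrow> nat set" where
  "occurrences u v = {i. \<forall>j<length v. u (i + j) = v ! j}"

definition return_seq :: "(nat \<Rightarrow> nat) \<Rightarrow> nat list \<Rightarrow> nat \<Rightarrow> nat list" where
  "return_seq u v n = map u [enumerate (occurrences u v) n ..< enumerate (occurrences u v) (Suc n)]"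

text \<open>The derived word (defined up to permutation of letters) is fixed by f iff
  some injective coding of the return words into {0,1} turns the sequence of
  return words into a fixed point of f.\<close>
definition derived_fixed_by :: "(nat \<Rightarrow> nat) \<Rightarrow> nat list \<Rightarrow> (nat \<Rightarrow> nat list) \<Rightarrow> bool" where
  "derived_fixed_by u v f \<longleftrightarrow>
     (\<exists>\<sigma> :: nat list \<Rightarrow> nat. inj_on \<sigma> (range (return_seq u v)) \<and>
        fixed_point f (\<lambda>n. \<sigma> (return_seq u v n)))"

definition Cset :: "gen list \<Rightarrow> (nat \<Rightarrow> nat list) set" where
  "Cset x = {phi_word v | v. \<exists>k::nat. v = (cyc ^^ k) x}"

end

theory Submission imports Defs begin

lemma morph_Nil[simp]: "morph f [] = []" by (simp add: morph_def)
lemma morph_Cons[simp]: "morph f (c # l) = f c @ morph f l" by (simp add: morph_def)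
lemma morph_append[simp]: "morph f (l1 @ l2) = morph f l1 @ morph f l2" by (simp add: morph_def)
lemma morph_single[simp]: "morph f [c] = f c" by (simp add: morph_def)
lemma morph_morph: "morph g (morph f l) = morph (\<lambda>c. morph g (f c)) l"
  by (induct l) auto

lemma pref_0[simp]: "pref x 0 = []" by (simp add: pref_def)
lemma pref_Suc: "pref x (Suc n) = pref x n @ [x n]" by (simp add: pref_def)
lemma length_pref[simp]: "length (pref x n) = n" by (simp add: pref_def)
lemma nth_pref[simp]: "k < n \<Longrightarrow> pref x n ! k = x k" by (simp add: pref_def)

lemma pref_add: "pref x (a + b) = pref x a @ map x [a..<a+b]"
  unfolding pref_def using upt_add_eq_append[of 0 a b] by simp
lemma pref_le: "a \<le> b \<Longrightarrow> pref x b = pref x a @ map x [a..<b]"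
  using pref_add[of x a "b - a"] by simp
lemma pref_eq_iff: "pref x n = l \<longleftrightarrow> length l = n \<and> (\<forall>k<n. x k = l ! k)"
  by (auto simp: pref_def list_eq_iff_nth_eq)

lemma take_pref: "k \<le> n \<Longrightarrow> take k (pref x n) = pref x k"
  by (simp add: pref_def take_map)

lemma phi_word_append: "phi_word (ws @ [g]) c = morph (phi_word ws) (phi_gen g c)"
proof (induct ws arbitrary: c)
  case Nil
  have "morph (\<lambda>c. [c]) l = l" for l by (induct l) auto
  then show ?case by simp
next
  case (Cons h ws)
  then show ?case by (simp add: morph_morph)
qed

definition isimg :: "(nat \<Rightarrow> nat list) \<Rightarrow> (nat \<Rightarrow> nat) \<Rightarrow> (nat \<Rightarrow> nat) \<Rightarrow> bool" where
  "isimg f x y \<longleftrightarrow> (\<forall>j. morph f (pref x j) = pref y (length (morph f (pref x j))))"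

definition nonerasing :: "(nat \<Rightarrow> nat list) \<Rightarrow> bool" where
  "nonerasing f \<longleftrightarrow> (\<forall>c. f c \<noteq> [])"

definition bin :: "(nat \<Rightarrow> nat) \<Rightarrow> bool" where
  "bin x \<longleftrightarrow> (\<forall>n. x n \<le> 1)"

definition fixd :: "(nat \<Rightarrow> nat list) \<Rightarrow> (nat \<Rightarrow> nat) \<Rightarrow> bool" where
  "fixd f x \<longleftrightarrow> bin x \<and> isimg f x x"

lemma fixed_point_iff: "fixed_point f x \<longleftrightarrow> fixd f x"
  unfolding fixed_point_def fixd_def isimg_def bin_def Let_def
  by (auto simp: image_subset_iff) (metis le_Suc_eq le_zero_eq insert_iff singletonD)+

lemma length_morph_ge: "nonerasing f \<Longrightarrow> length l \<le> length (morph f l)"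
proof (induct l)
  case (Cons c l)
  then have "f c \<noteq> []" by (auto simp: nonerasing_def)
  then show ?case using Cons by (cases "f c") auto
qed simp

lemma isimg_pref: "isimg f x y \<Longrightarrow> morph f (pref x j) = pref y (length (morph f (pref x j)))"
  by (simp add: isimg_def)

lemma isimg_unique:
  assumes "isimg f x y" "isimg f x z" "nonerasing f" shows "y = z"
proof
  fix n
  let ?L = "length (morph f (pref x (Suc n)))"
  have L: "Suc n \<le> ?L" using length_morph_ge[OF assms(3), of "pref x (Suc n)"] by simp
  have "pref y ?L = pref z ?L" using isimg_pref[OF assms(1)] isimg_pref[OF assms(2)] by metis
  then have "pref y ?L ! n = pref z ?L ! n" by simp
  then show "y n = z n" using L by simp
qed

definition img :: "(nat \<Rightarrow> nat list) \<Rightarrow> (nat \<Rightarrow> nat) \<Rightarrow> nat \<Rightarrow> nat" where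
  "img f x n = morph f (pref x (Suc n)) ! n"

lemma morph_pref_nth:
  assumes "k < length (morph f (pref x a))" "a \<le> b"
  shows "morph f (pref x b) ! k = morph f (pref x a) ! k"
  using assms pref_le[of a b x] by (simp add: nth_append)

lemma isimg_img: assumes "nonerasing f" shows "isimg f x (img f x)"
  unfolding isimg_def
proof
  fix j
  have "pref (img f x) (length (morph f (pref x j))) = morph f (pref x j)"
    unfolding pref_eq_iff
  proof (intro conjI allI impI refl)
    fix k assume k: "k < length (morph f (pref x j))"
    have k1: "k < length (morph f (pref x (Suc k)))"
      using length_morph_ge[OF assms, of "pref x (Suc k)"] by simp
    show "img f x k = morph f (pref x j) ! k"
    proof (cases "Suc k \<le> j")
      case True then show ?thesis unfolding img_def using morph_pref_nth[OF k1 True] by simp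
    next
      case False then show ?thesis unfolding img_def using morph_pref_nth[OF k, of "Suc k"] by simp
    qed
  qed
  then show "morph f (pref x j) = pref (img f x) (length (morph f (pref x j)))" by simp
qed

lemma isimg_comp:
  assumes "isimg f x y" "isimg g y z"
  shows "isimg (\<lambda>c. morph g (f c)) x z"
  unfolding isimg_def
proof
  fix j
  have "morph (\<lambda>c. morph g (f c)) (pref x j) = morph g (morph f (pref x j))" by (simp add: morph_morph)
  also have "\<dots> = morph g (pref y (length (morph f (pref x j))))" using isimg_pref[OF assms(1)] by metis
  also have "\<dots> = pref z (length (morph g (pref y (length (morph f (pref x j))))))" using isimg_pref[OF assms(2)] by metis
  finally show "morph (\<lambda>c. morph g (f c)) (pref x j) = pref z (length (morph (\<lambda>c. morph g (f c)) (pref x j)))"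
    by simp
qed

definition cutp :: "(nat \<Rightarrow> nat list) \<Rightarrow> (nat \<Rightarrow> nat) \<Rightarrow> nat \<Rightarrow> nat" where
  "cutp f x j = length (morph f (pref x j))"

lemma cutp_0[simp]: "cutp f x 0 = 0" by (simp add: cutp_def)
lemma cutp_Suc: "cutp f x (Suc j) = cutp f x j + length (f (x j))"
  by (simp add: cutp_def pref_Suc)

lemma cutp_less_Suc: "nonerasing f \<Longrightarrow> cutp f x j < cutp f x (Suc j)"
  by (simp add: cutp_Suc nonerasing_def)

lemma cutp_strict_mono: "nonerasing f \<Longrightarrow> strict_mono (cutp f x)"
  by (simp add: strict_mono_Suc_iff cutp_less_Suc)

lemma isimg_cut: "isimg f x1 x \<Longrightarrow> pref x (cutp f x1 j) = morph f (pref x1 j)"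
  by (metis cutp_def isimg_pref)

lemma block:
  assumes "isimg f x1 x" "i < length (f (x1 j))"
  shows "x (cutp f x1 j + i) = f (x1 j) ! i"
proof -
  have "pref x (cutp f x1 (Suc j)) = morph f (pref x1 j) @ f (x1 j)"
    using isimg_cut[OF assms(1), of "Suc j"] by (simp add: pref_Suc)
  then have "pref x (cutp f x1 (Suc j)) ! (cutp f x1 j + i) = f (x1 j) ! i"
    by (simp add: nth_append cutp_def)
  moreover have "cutp f x1 j + i < cutp f x1 (Suc j)" using assms(2) by (simp add: cutp_Suc)
  ultimately show ?thesis by simp
qed

lemma block_exists:
  assumes "nonerasing f" shows "\<exists>j. cutp f x j \<le> i \<and> i < cutp f x (Suc j)"
proof (induct i)
  case 0 then show ?case using cutp_less_Suc[OF assms, of x 0] by (intro exI[of _ 0]) auto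
next
  case (Suc i)
  then obtain j where j: "cutp f x j \<le> i" "i < cutp f x (Suc j)" by blast
  show ?case
  proof (cases "Suc i < cutp f x (Suc j)")
    case True then show ?thesis using j by (intro exI[of _ j]) auto
  next
    case False then show ?thesis using j cutp_less_Suc[OF assms, of x "Suc j"]
      by (intro exI[of _ "Suc j"]) auto
  qed
qed

lemma occ_iff: "i \<in> occurrences x s \<longleftrightarrow> (\<forall>k<length s. x (i + k) = s ! k)"
  by (simp add: occurrences_def)

lemma occ_nth: "i \<in> occurrences x s \<Longrightarrow> k < length s \<Longrightarrow> x (i + k) = s ! k"
  by (simp add: occ_iff)

lemma occ_Nil[simp]: "occurrences x [] = UNIV" by (simp add: occurrences_def)

lemma occ_append: "i \<in> occurrences x (l1 @ l2) \<longleftrightarrow> i \<in> occurrences x l1 \<and> i + length l1 \<in> occurrences x l2"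
  unfolding occ_iff
proof safe
  fix k assume "\<forall>k<length (l1 @ l2). x (i + k) = (l1 @ l2) ! k" "k < length l2"
  then show "x (i + length l1 + k) = l2 ! k"
    by (metis (no_types, lifting) add.assoc length_append nat_add_left_cancel_less nth_append_length_plus)
next
  fix k assume "\<forall>k<length (l1 @ l2). x (i + k) = (l1 @ l2) ! k" "k < length l1"
  then show "x (i + k) = l1 ! k" by (metis length_append nth_append trans_less_add1)
next
  fix k assume "\<forall>k<length l1. x (i + k) = l1 ! k" "\<forall>k<length l2. x (i + length l1 + k) = l2 ! k"
    "k < length (l1 @ l2)"
  then show "x (i + k) = (l1 @ l2) ! k"
    by (cases "k < length l1") (auto simp: nth_append dest: spec[of _ "k - length l1"])
qed

lemma occ_Cons: "i \<in> occurrences x (c # l) \<longleftrightarrow> x i = c \<and> Suc i \<in> occurrences x l"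
  using occ_append[of i x "[c]" l] by (simp add: occ_iff)

lemma occ_pref: "0 \<in> occurrences x (pref x n)"
  by (simp add: occ_iff)

lemma occ_block: "isimg f x1 x \<Longrightarrow> cutp f x1 j \<in> occurrences x (f (x1 j))"
  by (simp add: occ_iff block)

lemma occ_morph:
  assumes "isimg f x1 x" "j \<in> occurrences x1 s"
  shows "cutp f x1 j \<in> occurrences x (morph f s)"
  using assms(2)
proof (induct s arbitrary: j)
  case (Cons c s)
  then have "x1 j = c" "Suc j \<in> occurrences x1 s" by (auto simp: occ_Cons)
  then show ?case using Cons(1)[of "Suc j"] occ_block[OF assms(1), of j]
    by (simp add: occ_append cutp_Suc)
qed simp

lemma map_cut:
  assumes "isimg f x1 x" "a \<le> b"
  shows "map x [cutp f x1 a..<cutp f x1 b] = morph f (map x1 [a..<b])"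
proof -
  have ab: "cutp f x1 a \<le> cutp f x1 b"
    using assms(2) pref_le[of a b x1] by (simp add: cutp_def)
  have "map x [cutp f x1 a..<cutp f x1 b] = drop (cutp f x1 a) (pref x (cutp f x1 b))"
    using pref_le[OF ab, of x] by simp
  also have "\<dots> = drop (cutp f x1 a) (morph f (pref x1 a) @ morph f (map x1 [a..<b]))"
    using isimg_cut[OF assms(1), of b] pref_le[OF assms(2), of x1] by simp
  also have "\<dots> = morph f (map x1 [a..<b])" by (simp add: cutp_def)
  finally show ?thesis .
qed

lemma strict_mono_range_eq:
  fixes f g :: "nat \<Rightarrow> nat"
  assumes f: "strict_mono f" and g: "strict_mono g" and r: "range f = range g"
  shows "f = g"
proof
  fix n show "f n = g n"
  proof (induct n rule: less_induct)
    case (less n)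
    obtain m where m: "f n = g m" using r by (metis rangeI imageE)
    obtain m' where m': "g n = f m'" using r by (metis rangeI imageE)
    have "\<not> m < n"
    proof
      assume "m < n"
      then have "f m = f n" using less m by simp
      then show False using \<open>m < n\<close> strict_mono_eq[OF f] by simp
    qed
    then have 1: "g n \<le> f n" using m strict_mono_less_eq[OF g] by simp
    have "\<not> m' < n"
    proof
      assume "m' < n"
      then have "g m' = g n" using less m' by simp
      then show False using \<open>m' < n\<close> strict_mono_eq[OF g] by simp
    qed
    then have 2: "f n \<le> g n" using m' strict_mono_less_eq[OF f] by simp
    show ?case using 1 2 by simp
  qed
qed

lemma enumerate_image:
  fixes f :: "nat \<Rightarrow> nat"
  assumes f: "strict_mono f" and S: "infinite S"
  shows "enumerate (f ` S) = f \<circ> enumerate S"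
proof -
  have fS: "infinite (f ` S)" using S strict_mono_imp_inj_on[OF f] finite_imageD
    by (metis inj_on_subset subset_UNIV)
  show ?thesis
  proof (rule strict_mono_range_eq)
    show "strict_mono (enumerate (f ` S))" using strict_mono_enumerate[OF fS] .
    show "strict_mono (f \<circ> enumerate S)" using strict_mono_enumerate[OF S] f
      by (simp add: strict_mono_def)
    show "range (enumerate (f ` S)) = range (f \<circ> enumerate S)"
      using range_enumerate[OF fS] range_enumerate[OF S] by (metis image_comp)
  qed
qed

lemma enumerate_UNIV: "enumerate (UNIV::nat set) = id"
  by (rule strict_mono_range_eq) (auto simp: strict_mono_enumerate range_enumerate strict_mono_def)

definition R :: "(nat \<Rightarrow> nat) \<Rightarrow> nat list \<Rightarrow> (nat \<Rightarrow> nat) \<Rightarrow> bool" where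
  "R x p z \<longleftrightarrow> infinite (occurrences x p) \<and> (\<forall>n m. return_seq x p n = return_seq x p m \<longleftrightarrow> z n = z m)"

lemma R_Nil: "R x [] x"
  unfolding R_def return_seq_def by (simp add: enumerate_UNIV)

definition injb :: "(nat \<Rightarrow> nat list) \<Rightarrow> bool" where
  "injb f \<longleftrightarrow> (\<forall>l1 l2. (\<forall>a\<in>set l1. a \<le> 1) \<longrightarrow> (\<forall>a\<in>set l2. a \<le> 1) \<longrightarrow> morph f l1 = morph f l2 \<longrightarrow> l1 = l2)"

lemma R_transfer:
  assumes im: "isimg f x1 x" and ne: "nonerasing f" and ij: "injb f" and b: "bin x1"
    and occ: "occurrences x p = cutp f x1 ` occurrences x1 p'"
    and r: "R x1 p' z"
  shows "R x p z"
proof -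
  have inf: "infinite (occurrences x1 p')" using r by (simp add: R_def)
  have sm: "strict_mono (cutp f x1)" using cutp_strict_mono[OF ne] .
  have inf2: "infinite (occurrences x p)" unfolding occ using inf strict_mono_imp_inj_on[OF sm] finite_imageD
    by (metis inj_on_subset subset_UNIV)
  have en: "enumerate (occurrences x p) = cutp f x1 \<circ> enumerate (occurrences x1 p')"
    unfolding occ by (rule enumerate_image[OF sm inf])
  have rs: "return_seq x p n = morph f (return_seq x1 p' n)" for n
    unfolding return_seq_def en
    using map_cut[OF im, of "enumerate (occurrences x1 p') n" "enumerate (occurrences x1 p') (Suc n)"]
      enumerate_mono[OF lessI inf, of n] by simp
  have bn: "\<forall>a\<in>set (return_seq x1 p' n). a \<le> 1" for n
    using b by (auto simp: return_seq_def bin_def)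
  have "return_seq x p n = return_seq x p m \<longleftrightarrow> return_seq x1 p' n = return_seq x1 p' m" for n m
    unfolding rs using ij bn unfolding injb_def by metis
  then show ?thesis using r inf2 by (simp add: R_def)
qed

definition bs :: "gen \<Rightarrow> nat" where
  "bs g = (case g of GA \<Rightarrow> 1 | GAl \<Rightarrow> 0 | GB \<Rightarrow> 0 | GBe \<Rightarrow> 1)"
definition kA :: "gen \<Rightarrow> bool" where
  "kA g \<longleftrightarrow> g = GA \<or> g = GAl"
definition flipB :: "gen \<Rightarrow> gen" where
  "flipB g = (case g of GA \<Rightarrow> GB | GAl \<Rightarrow> GBe | GB \<Rightarrow> GB | GBe \<Rightarrow> GBe)"

lemma bs_le: "bs g \<le> 1" by (cases g) (auto simp: bs_def)
lemma bs_flipB: "kA g \<Longrightarrow> bs (flipB g) = 1 - bs g" by (cases g) (auto simp: bs_def kA_def flipB_def)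
lemma kA_flipB: "kA g \<Longrightarrow> \<not> kA (flipB g)" by (cases g) (auto simp: kA_def flipB_def)
lemma notkA_flipB: "\<not> kA g \<Longrightarrow> \<exists>g0. kA g0 \<and> g = flipB g0"
  by (cases g) (auto simp: kA_def flipB_def intro: exI[of _ GA] exI[of _ GAl])

lemma gen_ne: "phi_gen g c \<noteq> []" by (cases g) auto
lemma gen_nonerasing: "nonerasing (phi_gen g)" by (simp add: nonerasing_def gen_ne)
lemma gen_bin: "a \<in> set (phi_gen g c) \<Longrightarrow> a \<le> 1" by (cases g) (auto split: if_splits)
lemma gen_hd: "c \<le> 1 \<Longrightarrow> phi_gen g c ! 0 = (if kA g then c else bs g)"
  by (cases g) (auto simp: kA_def bs_def)
lemma gen_len: "c \<le> 1 \<Longrightarrow> length (phi_gen g c) = (if kA g = (c = bs g) then 2 else 1)"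
  by (cases g) (auto simp: kA_def bs_def)
lemma gen_len_le: "length (phi_gen g c) \<le> 2" by (cases g) auto
lemma gen_two: "length (phi_gen g c) = 2 \<Longrightarrow> phi_gen g c = [bs g, 1 - bs g]"
  by (cases g) (auto simp: bs_def split: if_splits)
lemma gen_one_letter: "c \<le> 1 \<Longrightarrow> length (phi_gen g c) = 1 \<Longrightarrow> phi_gen g c = [if kA g then c else bs g]"
  by (cases g) (auto simp: kA_def bs_def split: if_splits)

lemma flip_identity:
  assumes "kA g"
  shows "morph (phi_gen (flipB g)) l @ [1 - bs g] = (1 - bs g) # morph (phi_gen g) l"
proof (induct l)
  case (Cons c l)
  have 1: "phi_gen (flipB g) c @ [1 - bs g] = (1 - bs g) # phi_gen g c"
    using assms by (cases g) (auto simp: kA_def flipB_def bs_def)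
  have "morph (phi_gen (flipB g)) (c # l) @ [1 - bs g] = phi_gen (flipB g) c @ (morph (phi_gen (flipB g)) l @ [1 - bs g])"
    by simp
  also have "\<dots> = (phi_gen (flipB g) c @ [1 - bs g]) @ morph (phi_gen g) l" using Cons by simp
  finally show ?case using 1 by simp
qed simp

lemma morph_ne: "l \<noteq> [] \<Longrightarrow> morph (phi_gen g) l \<noteq> []"
  by (cases l) (auto simp: gen_ne)

lemma injb_A: assumes "kA g" shows "injb (phi_gen g)"
  unfolding injb_def
proof (intro allI impI)
  fix l1 l2 :: "nat list"
  assume "\<forall>a\<in>set l1. a \<le> 1" "\<forall>a\<in>set l2. a \<le> 1" "morph (phi_gen g) l1 = morph (phi_gen g) l2"
  then show "l1 = l2"
  proof (induct l1 arbitrary: l2)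
    case Nil then show ?case using morph_ne by (metis morph_Nil)
  next
    case (Cons c l1)
    then obtain c' l2' where l2: "l2 = c' # l2'" using morph_ne by (metis list.exhaust morph_Nil)
    have cc: "c \<le> 1" "c' \<le> 1" using Cons(2,3) l2 by auto
    have "(phi_gen g c @ morph (phi_gen g) l1) ! 0 = (phi_gen g c' @ morph (phi_gen g) l2') ! 0"
      using Cons(4) l2 by simp
    then have "phi_gen g c ! 0 = phi_gen g c' ! 0" using gen_ne by (simp add: nth_append)
    then have "c = c'" using gen_hd[OF cc(1), of g] gen_hd[OF cc(2), of g] assms by simp
    then show ?case using Cons l2 by simp
  qed
qed

lemma injb_gen: "injb (phi_gen g)"
proof (cases "kA g")
  case True then show ?thesis by (rule injb_A)
next
  case False
  then obtain g0 where g0: "kA g0" "g = flipB g0" using notkA_flipB by blast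
  show ?thesis unfolding injb_def
  proof (intro allI impI)
    fix l1 l2 :: "nat list"
    assume a: "\<forall>a\<in>set l1. a \<le> 1" "\<forall>a\<in>set l2. a \<le> 1" "morph (phi_gen g) l1 = morph (phi_gen g) l2"
    then have "morph (phi_gen g0) l1 = morph (phi_gen g0) l2"
      using flip_identity[OF g0(1), of l1] flip_identity[OF g0(1), of l2] g0(2) by (metis list.inject)
    then show "l1 = l2" using injb_A[OF g0(1)] a(1,2) unfolding injb_def by blast
  qed
qed


lemma occ_extend:
  assumes "p \<noteq> []" "\<And>i. x i = last p \<Longrightarrow> x (Suc i) = e"
  shows "occurrences x (p @ [e]) = occurrences x p"
proof safe
  fix i assume "i \<in> occurrences x (p @ [e])" then show "i \<in> occurrences x p" by (simp add: occ_append)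
next
  fix i assume i: "i \<in> occurrences x p"
  have "x (i + (length p - 1)) = p ! (length p - 1)" using i assms(1) by (simp add: occ_iff)
  then have "x (i + (length p - 1)) = last p" using assms(1) by (simp add: last_conv_nth)
  then have "x (Suc (i + (length p - 1))) = e" by (rule assms(2))
  then have "x (i + length p) = e" using assms(1) by (cases p) auto
  then show "i \<in> occurrences x (p @ [e])" using i by (simp add: occ_append occ_Cons)
qed

context
  fixes g :: gen and x1 x :: "nat \<Rightarrow> nat"
  assumes im: "isimg (phi_gen g) x1 x" and b1: "bin x1"
begin

private abbreviation "ct \<equiv> cutp (phi_gen g) x1"

lemma loc:
  obtains j q where "i = ct j + q" "q < length (phi_gen g (x1 j))" "x i = phi_gen g (x1 j) ! q"
proof -
  obtain j where j: "ct j \<le> i" "i < ct (Suc j)" using block_exists[OF gen_nonerasing] by blast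
  define q where "q = i - ct j"
  have "i = ct j + q" "q < length (phi_gen g (x1 j))" using j by (auto simp: q_def cutp_Suc)
  then show ?thesis using that block[OF im] by metis
qed

lemma x_cut: "x (ct j) = (if kA g then x1 j else bs g)"
  using block[OF im, of 0 j] gen_hd[of "x1 j" g] b1 gen_ne[of g "x1 j"] by (simp add: bin_def)

lemma bin_img: "bin x"
proof -
  have "x i \<le> 1" for i
  proof (rule loc[of i])
    fix j q assume "q < length (phi_gen g (x1 j))" "x i = phi_gen g (x1 j) ! q"
    then show "x i \<le> 1" using gen_bin nth_mem by metis
  qed
  then show ?thesis by (simp add: bin_def)
qed

lemma second_letter:
  assumes "i = ct j + q" "q < length (phi_gen g (x1 j))" "0 < q"
  shows "x i = 1 - bs g" "q = 1" "length (phi_gen g (x1 j)) = 2"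
proof -
  have l: "length (phi_gen g (x1 j)) = 2" using assms(2,3) gen_len_le[of g "x1 j"] by linarith
  show "q = 1" using assms(2,3) l by simp
  show "x i = 1 - bs g" using block[OF im, of q j] assms gen_two[OF l] l \<open>q = 1\<close> by auto
  show "length (phi_gen g (x1 j)) = 2" by (rule l)
qed

lemma L1: assumes "x i = bs g" shows "i \<in> range ct"
proof (rule loc[of i])
  fix j q assume a: "i = ct j + q" "q < length (phi_gen g (x1 j))" "x i = phi_gen g (x1 j) ! q"
  show ?thesis
  proof (cases "q = 0")
    case True then show ?thesis using a by simp
  next
    case False then have "x i = 1 - bs g" using second_letter[OF a(1,2)] by simp
    then show ?thesis using assms bs_le[of g] by arith
  qed
qed

lemma L3: assumes "kA g" "x i = bs g" shows "x (Suc i) = 1 - bs g"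
proof -
  obtain j where j: "i = ct j" using L1[OF assms(2)] by blast
  have "x1 j = bs g" using x_cut[of j] assms j by simp
  then have l: "length (phi_gen g (x1 j)) = 2" using gen_len[of "bs g" g] bs_le[of g] assms(1) by simp
  show ?thesis using block[OF im, of 1 j] gen_two[OF l] l j by simp
qed

lemma L4: assumes "\<not> kA g" "x i = 1 - bs g" shows "x (Suc i) = bs g"
proof (rule loc[of i])
  fix j q assume a: "i = ct j + q" "q < length (phi_gen g (x1 j))" "x i = phi_gen g (x1 j) ! q"
  have "q \<noteq> 0"
  proof
    assume "q = 0" then have "x i = bs g" using x_cut[of j] a(1) assms(1) by simp
    then show False using assms(2) bs_le[of g] by arith
  qed
  then have "q = 1" "length (phi_gen g (x1 j)) = 2" using second_letter[OF a(1,2)] by auto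
  then have "Suc i = ct (Suc j)" using a(1) by (simp add: cutp_Suc)
  then show ?thesis using x_cut[of "Suc j"] assms(1) by simp
qed


lemma at_cuts:
  assumes "P \<noteq> []" "P ! 0 = bs g" "i \<in> occurrences x P" shows "i \<in> range ct"
  using assms L1 by (simp add: occ_iff) (metis add_0_right length_greater_0_conv)

lemma occ_transfer:
  assumes "occurrences x p = occurrences x P" "P \<noteq> []" "P ! 0 = bs g"
    "\<And>j. ct j \<in> occurrences x P \<longleftrightarrow> j \<in> occurrences x1 p'"
  shows "occurrences x p = ct ` occurrences x1 p'"
  unfolding assms(1)
proof safe
  fix i assume i: "i \<in> occurrences x P"
  then obtain j where "i = ct j" using at_cuts[OF assms(2,3)] by blast
  then show "i \<in> ct ` occurrences x1 p'" using i assms(4) by blast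
next
  fix j assume "j \<in> occurrences x1 p'" then show "ct j \<in> occurrences x P" using assms(4) by blast
qed

lemma coreA:
  assumes "kA g" "\<forall>a\<in>set s. a \<le> 1"
  shows "ct j \<in> occurrences x (morph (phi_gen g) s) \<longleftrightarrow> j \<in> occurrences x1 s"
  using assms(2)
proof (induct s arbitrary: j)
  case (Cons c s)
  have c: "c \<le> 1" using Cons by simp
  show ?case
  proof (cases "x1 j = c")
    case True
    have e: "ct j + length (phi_gen g c) = ct (Suc j)" using True by (simp add: cutp_Suc)
    show ?thesis using Cons(1)[of "Suc j"] Cons(2) occ_block[OF im, of j] True
      unfolding morph_Cons occ_append e occ_Cons by simp
  next
    case False
    have "ct j \<notin> occurrences x (phi_gen g c)"
    proof
      assume "ct j \<in> occurrences x (phi_gen g c)"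
      then have "x (ct j) = phi_gen g c ! 0" using gen_ne[of g c] occ_nth[of "ct j" x "phi_gen g c" 0] by simp
      then show False using x_cut[of j] gen_hd[OF c, of g] assms(1) False by simp
    qed
    then show ?thesis using False by (simp add: occ_append occ_Cons)
  qed
qed simp

lemma morph_B_hd: "\<not> kA g \<Longrightarrow> (morph (phi_gen g) s @ [bs g]) ! 0 = bs g"
proof (cases s)
  case (Cons c s')
  assume "\<not> kA g"
  then have "phi_gen g c ! 0 = bs g" by (cases g) (auto simp: kA_def bs_def)
  then show ?thesis using Cons gen_ne[of g c] by (simp add: nth_append)
qed simp

lemma mismatchB:
  assumes "\<not> kA g" "c \<le> 1" "x1 j \<noteq> c"
  shows "ct j \<notin> occurrences x (phi_gen g c @ [bs g])"
proof
  assume occ: "ct j \<in> occurrences x (phi_gen g c @ [bs g])"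
  have xj: "x1 j \<le> 1" using b1 by (simp add: bin_def)
  show False
  proof (cases "c = bs g")
    case True
    then have "phi_gen g c = [bs g]" using gen_one_letter[OF assms(2), of g] gen_len[OF assms(2), of g] assms(1) by simp
    then have 1: "x (Suc (ct j)) = bs g" using occ by (simp add: occ_Cons)
    have l2x: "length (phi_gen g (x1 j)) = 2" using gen_len[OF xj, of g] assms True by simp
    have "x (Suc (ct j)) = 1 - bs g" using block[OF im, of 1 j] gen_two[OF l2x] l2x by simp
    then show False using 1 bs_le[of g] by arith
  next
    case False
    then have l2: "length (phi_gen g c) = 2" using gen_len[OF assms(2), of g] assms(1) by simp
    then have "x (Suc (ct j)) = 1 - bs g" using occ gen_two[OF l2] by (simp add: occ_Cons)
    moreover have "x1 j = bs g" using False assms(2,3) xj bs_le[of g] by arith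
    then have "length (phi_gen g (x1 j)) = 1" using gen_len[OF xj, of g] assms(1) by simp
    then have "Suc (ct j) = ct (Suc j)" by (simp add: cutp_Suc)
    then have "x (Suc (ct j)) = bs g" using x_cut[of "Suc j"] assms(1) by simp
    ultimately show False using bs_le[of g] by arith
  qed
qed

lemma coreB:
  assumes "\<not> kA g" "\<forall>a\<in>set s. a \<le> 1"
  shows "ct j \<in> occurrences x (morph (phi_gen g) s @ [bs g]) \<longleftrightarrow> j \<in> occurrences x1 s"
  using assms(2)
proof (induct s arbitrary: j)
  case Nil then show ?case using x_cut[of j] assms(1) by (simp add: occ_iff)
next
  case (Cons c s)
  have c: "c \<le> 1" using Cons by simp
  show ?case
  proof (cases "x1 j = c")
    case True
    have e: "ct j + length (phi_gen g c) = ct (Suc j)" using True by (simp add: cutp_Suc)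
    have m: "morph (phi_gen g) (c # s) @ [bs g] = phi_gen g c @ (morph (phi_gen g) s @ [bs g])" by simp
    show ?thesis using Cons(1)[of "Suc j"] Cons(2) occ_block[OF im, of j] True
      unfolding m occ_append[of _ _ "phi_gen g c"] e occ_Cons by simp
  next
    case False
    have "ct j \<notin> occurrences x (phi_gen g c @ (morph (phi_gen g) s @ [bs g]))"
    proof
      assume a: "ct j \<in> occurrences x (phi_gen g c @ (morph (phi_gen g) s @ [bs g]))"
      then have "ct j + length (phi_gen g c) \<in> occurrences x (morph (phi_gen g) s @ [bs g])"
        by (simp add: occ_append)
      then have "x (ct j + length (phi_gen g c)) = bs g"
        using morph_B_hd[OF assms(1), of s] occ_nth[of _ x "morph (phi_gen g) s @ [bs g]" 0] by simp
      then have "ct j \<in> occurrences x (phi_gen g c @ [bs g])"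
        using a by (simp add: occ_append occ_Cons)
      then show False using mismatchB[OF assms(1) c False] by simp
    qed
    then show ?thesis using False by (simp add: occ_append occ_Cons)
  qed
qed

lemma pref_bin: "\<forall>a\<in>set (pref x1 n). a \<le> 1"
  using b1 by (auto simp: pref_def bin_def)

lemma DS:
  assumes pne: "p \<noteq> []" and pp: "p = pref x (length p)" and x0: "x 0 = bs g"
  shows "\<exists>p'. p' = pref x1 (length p') \<and> occurrences x p = ct ` occurrences x1 p'
     \<and> (kA g \<longrightarrow> p' \<noteq> [] \<and> length p' \<le> length p) \<and> (\<not> kA g \<longrightarrow> length p' < length p)"
proof -
  define L where "L = length p"
  obtain j where j: "ct j \<le> L" "L < ct (Suc j)" using block_exists[OF gen_nonerasing] by blast
  define q where "q = L - ct j"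
  have qlt: "q < length (phi_gen g (x1 j))" using j by (simp add: q_def cutp_Suc)
  have ctj: "ct j = length (morph (phi_gen g) (pref x1 j))" by (simp add: cutp_def)
  have "p = take L (pref x (ct (Suc j)))" using pp j take_pref[of L "ct (Suc j)" x] by (simp add: L_def)
  also have "\<dots> = take L (morph (phi_gen g) (pref x1 j) @ phi_gen g (x1 j))"
    using isimg_cut[OF im, of "Suc j"] by (simp add: pref_Suc)
  finally have pdec: "p = morph (phi_gen g) (pref x1 j) @ take q (phi_gen g (x1 j))"
    using j ctj by (simp add: q_def)
  have p0: "p ! 0 = bs g" using pp x0 pne by (metis length_greater_0_conv nth_pref)
  have xj: "x1 j \<le> 1" using b1 by (simp add: bin_def)
  have lm: "length (pref x1 k) \<le> length (morph (phi_gen g) (pref x1 k))" for k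
    by (rule length_morph_ge[OF gen_nonerasing])
  have q01: "q = 0 \<or> q = 1" using qlt gen_len_le[of g "x1 j"] by linarith
  have tk1: "take 1 (phi_gen g (x1 j)) = [phi_gen g (x1 j) ! 0]" using gen_ne[of g "x1 j"]
    by (cases "phi_gen g (x1 j)") auto
  show ?thesis
  proof (cases "kA g")
    case kA: True
    show ?thesis
    proof (cases "q = 0")
      case True
      then have pe: "p = morph (phi_gen g) (pref x1 j)" using pdec by simp
      have "j \<noteq> 0"
      proof assume "j = 0" then show False using pe pne by simp qed
      moreover have "occurrences x p = ct ` occurrences x1 (pref x1 j)"
        by (rule occ_transfer[OF refl pne p0]) (simp add: pe coreA[OF kA pref_bin])
      ultimately show ?thesis using kA lm[of j] pe by (intro exI[of _ "pref x1 j"]) auto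
    next
      case False
      then have q1: "q = 1" using q01 by simp
      then have l2: "length (phi_gen g (x1 j)) = 2" using qlt gen_len_le[of g "x1 j"] by linarith
      then have xjb: "x1 j = bs g" using gen_len[OF xj, of g] kA by (simp split: if_splits)
      have pe: "p = morph (phi_gen g) (pref x1 j) @ [bs g]"
        using pdec q1 tk1 gen_two[OF l2] by simp
      have PE: "p @ [1 - bs g] = morph (phi_gen g) (pref x1 (Suc j))"
        using pe gen_two[OF l2] xjb by (simp add: pref_Suc)
      have ext: "occurrences x (p @ [1 - bs g]) = occurrences x p"
        by (rule occ_extend[OF pne]) (simp add: pe L3[OF kA])
      have ext2: "occurrences x p = occurrences x (morph (phi_gen g) (pref x1 (Suc j)))"
        using ext PE by simp
      have m0: "morph (phi_gen g) (pref x1 (Suc j)) ! 0 = bs g" using PE p0 pne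
        by (metis length_greater_0_conv nth_append)
      have mne: "morph (phi_gen g) (pref x1 (Suc j)) \<noteq> []" using PE by (metis Nil_is_append_conv not_Cons_self2)
      have "occurrences x p = ct ` occurrences x1 (pref x1 (Suc j))"
        by (rule occ_transfer[OF ext2 mne m0]) (simp add: coreA[OF kA pref_bin])
      moreover have "pref x1 (Suc j) \<noteq> []" by (simp add: pref_Suc)
      ultimately show ?thesis using kA lm[of j] pe by (intro exI[of _ "pref x1 (Suc j)"]) auto
    qed
  next
    case kB: False
    have hdB: "phi_gen g c ! 0 = bs g" for c using kB by (cases g) (auto simp: kA_def bs_def)
    show ?thesis
    proof (cases "q = 0")
      case False
      then have q1: "q = 1" using q01 by simp
      have pe: "p = morph (phi_gen g) (pref x1 j) @ [bs g]" using pdec q1 tk1 hdB by simp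
      have "occurrences x p = ct ` occurrences x1 (pref x1 j)"
        by (rule occ_transfer[OF refl pne p0]) (simp add: pe coreB[OF kB pref_bin])
      then show ?thesis using kB lm[of j] pe by (intro exI[of _ "pref x1 j"]) auto
    next
      case True
      then have pe: "p = morph (phi_gen g) (pref x1 j)" using pdec by simp
      then obtain j0 where j0: "j = Suc j0" using pne by (cases j) auto
      define c where "c = x1 j0"
      have c1: "c \<le> 1" using b1 by (simp add: bin_def c_def)
      have pe2: "p = morph (phi_gen g) (pref x1 j0) @ phi_gen g c" using pe j0 by (simp add: pref_Suc c_def)
      show ?thesis
      proof (cases "c = bs g")
        case True
        then have "phi_gen g c = [bs g]" using gen_one_letter[OF c1, of g] gen_len[OF c1, of g] kB by simp
        then have pe3: "p = morph (phi_gen g) (pref x1 j0) @ [bs g]" using pe2 by simp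
        have "occurrences x p = ct ` occurrences x1 (pref x1 j0)"
          by (rule occ_transfer[OF refl pne p0]) (simp add: pe3 coreB[OF kB pref_bin])
        then show ?thesis using kB lm[of j0] pe3 by (intro exI[of _ "pref x1 j0"]) auto
      next
        case False
        then have l2: "length (phi_gen g c) = 2" using gen_len[OF c1, of g] kB by simp
        have pe3: "p = morph (phi_gen g) (pref x1 j0) @ [bs g, 1 - bs g]" using pe2 gen_two[OF l2] by simp
        have ext: "occurrences x (p @ [bs g]) = occurrences x p"
          by (rule occ_extend[OF pne]) (simp add: pe3 L4[OF kB])
        have "occurrences x p = ct ` occurrences x1 (pref x1 j)"
        proof (rule occ_transfer[OF ext[symmetric]])
          have P: "p @ [bs g] = morph (phi_gen g) (pref x1 j) @ [bs g]" using pe by simp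
          show "p @ [bs g] \<noteq> []" by simp
          show "(p @ [bs g]) ! 0 = bs g" using p0 pne by (simp add: nth_append)
          show "ct ja \<in> occurrences x (p @ [bs g]) \<longleftrightarrow> ja \<in> occurrences x1 (pref x1 j)" for ja
            unfolding P by (rule coreB[OF kB pref_bin])
        qed
        moreover have "length p = length (morph (phi_gen g) (pref x1 j0)) + 2" using pe3 by simp
        ultimately show ?thesis using kB lm[of j0] j0 by (intro exI[of _ "pref x1 j"]) auto
      qed
    qed
  qed
qed

end


lemma phi_word_Cons_fun: "phi_word (g # v) = (\<lambda>c. morph (phi_gen g) (phi_word v c))"
  by (rule ext) simp

lemma phi_word_ne: "phi_word v c \<noteq> []"
  by (induct v arbitrary: c) (auto simp: morph_ne)

lemma nonerasing_phi_word: "nonerasing (phi_word v)"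
  by (simp add: nonerasing_def phi_word_ne)

lemma morph_set: "a \<in> set (morph f l) \<Longrightarrow> \<exists>c\<in>set l. a \<in> set (f c)"
  by (induct l) auto

lemma phi_word_bin: "c \<le> 1 \<Longrightarrow> a \<in> set (phi_word v c) \<Longrightarrow> a \<le> 1"
proof (induct v arbitrary: a)
  case (Cons g v) then show ?case using morph_set gen_bin by fastforce
qed simp

lemma bin_img_gen:
  assumes "bin x" "\<And>c a. c \<le> 1 \<Longrightarrow> a \<in> set (f c) \<Longrightarrow> a \<le> 1" "nonerasing f"
  shows "bin (img f x)"
  unfolding bin_def img_def
proof
  fix n
  have "n < length (morph f (pref x (Suc n)))" using length_morph_ge[OF assms(3), of "pref x (Suc n)"] by simp
  then have "morph f (pref x (Suc n)) ! n \<in> set (morph f (pref x (Suc n)))" by simp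
  then obtain c where "c \<in> set (pref x (Suc n))" "morph f (pref x (Suc n)) ! n \<in> set (f c)"
    using morph_set by metis
  moreover have "c \<le> 1" using calculation(1) assms(1) by (auto simp: pref_def bin_def)
  ultimately show "morph f (pref x (Suc n)) ! n \<le> 1" using assms(2) by blast
qed

lemma bin_img_word: "bin x \<Longrightarrow> bin (img (phi_word v) x)"
  by (rule bin_img_gen[OF _ phi_word_bin nonerasing_phi_word])

lemma bin_img_genl: "bin x \<Longrightarrow> bin (img (phi_gen g) x)"
  by (rule bin_img_gen[OF _ gen_bin gen_nonerasing])

lemma isimg_first: "isimg f x y \<Longrightarrow> nonerasing f \<Longrightarrow> y 0 = f (x 0) ! 0"
  using isimg_pref[of f x y 1] by (simp add: pref_Suc nonerasing_def)
    (metis length_greater_0_conv nth_pref)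

lemma gen_hdA: "kA g \<Longrightarrow> c \<le> 1 \<Longrightarrow> phi_gen g c ! 0 = c" using gen_hd by simp

lemma level:
  assumes "fixd (phi_word (g # v)) y"
  defines "y1 \<equiv> img (phi_word v) y"
  shows "isimg (phi_gen g) y1 y" "fixd (phi_word (v @ [g])) y1" "bin y1"
proof -
  have b: "bin y" and im: "isimg (phi_word (g # v)) y y" using assms by (auto simp: fixd_def)
  have 1: "isimg (phi_word v) y y1" unfolding y1_def by (rule isimg_img[OF nonerasing_phi_word])
  have 2: "isimg (phi_gen g) y1 (img (phi_gen g) y1)" by (rule isimg_img[OF gen_nonerasing])
  have "isimg (phi_word (g # v)) y (img (phi_gen g) y1)"
    using isimg_comp[OF 1 2] by (simp add: phi_word_Cons_fun)
  then have "img (phi_gen g) y1 = y" using isimg_unique[OF _ im nonerasing_phi_word] by blast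
  then show 3: "isimg (phi_gen g) y1 y" using 2 by simp
  show "bin y1" unfolding y1_def by (rule bin_img_word[OF b])
  have "isimg (\<lambda>c. morph (phi_word v) (phi_gen g c)) y1 y1" by (rule isimg_comp[OF 3 1])
  moreover have "(\<lambda>c. morph (phi_word v) (phi_gen g c)) = phi_word (v @ [g])"
    by (rule ext) (simp add: phi_word_append)
  ultimately show "fixd (phi_word (v @ [g])) y1" using \<open>bin y1\<close> by (simp add: fixd_def)
qed

lemma pref_Suc_Cons: "pref x (Suc n) = x 0 # pref (\<lambda>k. x (Suc k)) n"
  by (induct n) (auto simp: pref_Suc)

lemma pref_of_app: "pref y L = A @ B \<Longrightarrow> pref y (length A) = A"
  by (metis append_eq_conv_conj length_append length_pref le_add1 take_pref)

lemma pref_tail: "pref (\<lambda>k. y (Suc k)) n = tl (pref y (Suc n))"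
  by (simp add: pref_Suc_Cons)

lemma conversion:
  assumes kA: "kA g" and im: "isimg (phi_gen g) y1 y" and y0: "y1 0 = 1 - bs g"
  shows "isimg (phi_gen (flipB g)) (\<lambda>n. y1 (Suc n)) y"
  unfolding isimg_def
proof
  fix j
  let ?t = "\<lambda>n. y1 (Suc n)"
  have ne: "1 - bs g \<noteq> bs g" using bs_le[of g] by arith
  have e1: "phi_gen g (1 - bs g) = [1 - bs g]"
    using gen_one_letter[of "1 - bs g" g] gen_len[of "1 - bs g" g] kA ne by auto
  have "morph (phi_gen (flipB g)) (pref ?t j) @ [1 - bs g] = morph (phi_gen g) (pref y1 (Suc j))"
    using flip_identity[OF kA, of "pref ?t j"] e1 y0 by (simp add: pref_Suc_Cons)
  also have "\<dots> = pref y (length (morph (phi_gen g) (pref y1 (Suc j))))" by (rule isimg_pref[OF im])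
  finally show "morph (phi_gen (flipB g)) (pref ?t j) = pref y (length (morph (phi_gen (flipB g)) (pref ?t j)))"
    by (metis pref_of_app)
qed

lemma tail_letter:
  assumes kA: "kA g" and im: "isimg (phi_gen g) z y" and z0: "z 0 = c" and c1: "c \<le> 1"
  shows "isimg (phi_gen (if bs g = c then flipB g else g)) (\<lambda>n. z (Suc n)) (\<lambda>n. y (Suc n))"
  unfolding isimg_def
proof
  fix j
  let ?t = "\<lambda>n. z (Suc n)" and ?g = "if bs g = c then flipB g else g"
  obtain L where L: "morph (phi_gen g) (pref z (Suc j)) = pref y L"
    using isimg_pref[OF im] by metis
  have "morph (phi_gen g) (pref z (Suc j)) = phi_gen g c @ morph (phi_gen g) (pref ?t j)"
    using z0 by (simp add: pref_Suc_Cons)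
  then have "tl (morph (phi_gen g) (pref z (Suc j))) = morph (phi_gen ?g) (pref ?t j) @ (if bs g = c then [1 - bs g] else [])"
  proof (cases "bs g = c")
    case True
    then have "length (phi_gen g c) = 2" using gen_len[OF c1, of g] kA by simp
    then have "phi_gen g c = [bs g, 1 - bs g]" by (rule gen_two)
    then show ?thesis using True flip_identity[OF kA, of "pref ?t j"]
      \<open>morph (phi_gen g) (pref z (Suc j)) = phi_gen g c @ morph (phi_gen g) (pref ?t j)\<close> by simp
  next
    case False
    then have "phi_gen g c = [c]" using gen_one_letter[OF c1, of g] gen_len[OF c1, of g] kA by simp
    then show ?thesis using False
      \<open>morph (phi_gen g) (pref z (Suc j)) = phi_gen g c @ morph (phi_gen g) (pref ?t j)\<close> by simp
  qed
  moreover have "tl (pref y L) = pref (\<lambda>k. y (Suc k)) (L - 1)"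
    by (cases L) (simp, simp only: pref_tail diff_Suc_1)
  ultimately have "pref (\<lambda>k. y (Suc k)) (L - 1) = morph (phi_gen ?g) (pref ?t j) @ (if bs g = c then [1 - bs g] else [])"
    using L by simp
  then show "morph (phi_gen ?g) (pref ?t j) = pref (\<lambda>k. y (Suc k)) (length (morph (phi_gen ?g) (pref ?t j)))"
    by (metis pref_of_app)
qed


definition Gc :: "nat \<Rightarrow> gen \<Rightarrow> gen" where
  "Gc c g = (if bs g = c then flipB g else g)"

lemma morph_id: "morph (\<lambda>c. [c]) l = l" by (induct l) auto

lemma phi_word_Nil_fun: "phi_word [] = (\<lambda>c. [c])" by (rule ext) simp

lemma isimg_id: "isimg (\<lambda>c. [c]) z y \<Longrightarrow> y = z"
proof
  fix n assume a: "isimg (\<lambda>c. [c]) z y"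
  have "morph (\<lambda>c. [c]) (pref z (Suc n)) = pref y (length (morph (\<lambda>c. [c]) (pref z (Suc n))))"
    by (rule isimg_pref[OF a])
  then have "pref z (Suc n) = pref y (Suc n)" by (simp add: morph_id)
  then show "y n = z n" by (simp add: pref_Suc)
qed

lemma isimg_id2: "isimg (\<lambda>c. [c]) z z" by (simp add: isimg_def morph_id)

lemma tail_word:
  assumes "\<forall>g\<in>set v. kA g" "isimg (phi_word v) z y" "z 0 = c" "bin z" "c \<le> 1"
  shows "isimg (phi_word (map (Gc c) v)) (\<lambda>n. z (Suc n)) (\<lambda>n. y (Suc n))"
  using assms
proof (induct v arbitrary: y)
  case Nil
  then have "y = z" using isimg_id by (simp add: phi_word_Nil_fun)
  then show ?case by (simp add: phi_word_Nil_fun isimg_id2)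
next
  case (Cons g v)
  define y' where "y' = img (phi_word v) z"
  have 1: "isimg (phi_word v) z y'" unfolding y'_def by (rule isimg_img[OF nonerasing_phi_word])
  have 2: "isimg (phi_gen g) y' (img (phi_gen g) y')" by (rule isimg_img[OF gen_nonerasing])
  have "isimg (phi_word (g # v)) z (img (phi_gen g) y')"
    using isimg_comp[OF 1 2] by (simp add: phi_word_Cons_fun)
  then have "img (phi_gen g) y' = y" using isimg_unique[OF _ Cons(3) nonerasing_phi_word] by blast
  then have 3: "isimg (phi_gen g) y' y" using 2 by simp
  have allA: "\<forall>g\<in>set v. kA g" and kg: "kA g" using Cons(2) by auto
  have "y' 0 = phi_word v c ! 0" using isimg_first[OF 1 nonerasing_phi_word] Cons(4) by simp
  also have "\<dots> = c"
  proof -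
    have "\<forall>g\<in>set v. kA g \<Longrightarrow> phi_word v c ! 0 = c" for v
    proof (induct v)
      case (Cons h v)
      have "phi_word (h # v) c ! 0 = phi_gen h (phi_word v c ! 0) ! 0"
        using phi_word_ne[of v c] gen_ne by (cases "phi_word v c") (auto simp: nth_append)
      then show ?case using Cons gen_hdA[of h c] \<open>c \<le> 1\<close> by simp
    qed simp
    then show ?thesis using allA .
  qed
  finally have y0: "y' 0 = c" .
  have IH: "isimg (phi_word (map (Gc c) v)) (\<lambda>n. z (Suc n)) (\<lambda>n. y' (Suc n))"
    using Cons(1)[OF allA 1 Cons(4,5,6)] .
  have L: "isimg (phi_gen (Gc c g)) (\<lambda>n. y' (Suc n)) (\<lambda>n. y (Suc n))"
    using tail_letter[OF kg 3 y0 Cons(6)] by (simp add: Gc_def)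
  show ?case using isimg_comp[OF IH L] by (simp add: phi_word_Cons_fun)
qed

lemma morph_nth0: "l \<noteq> [] \<Longrightarrow> f (l ! 0) \<noteq> [] \<Longrightarrow> morph f l ! 0 = f (l ! 0) ! 0"
  by (cases l) (auto simp: nth_append)

lemma phi_word_hd_B:
  assumes "\<forall>g\<in>set v. bs g = d" "\<exists>g\<in>set v. \<not> kA g" "c \<le> 1"
  shows "phi_word v c ! 0 = d"
  using assms
proof (induct v)
  case (Cons g v)
  have e: "phi_word (g # v) c ! 0 = phi_gen g (phi_word v c ! 0) ! 0"
    using morph_nth0[OF phi_word_ne gen_ne] by simp
  have b: "phi_word v c ! 0 \<le> 1" using phi_word_bin[OF Cons(4)] phi_word_ne[of v c] by (metis nth_mem length_greater_0_conv)
  show ?case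
  proof (cases "kA g")
    case True
    then have "phi_word v c ! 0 = d" using Cons by auto
    then show ?thesis using e gen_hdA[OF True] b Cons(2) by simp
  next
    case False then show ?thesis using e gen_hd[OF b, of g] Cons(2) by simp
  qed
qed simp

lemma cyc_Suc: "(cyc ^^ k) (cyc v) = (cyc ^^ Suc k) v"
  by (simp add: funpow_Suc_right del: funpow.simps)

lemma lemT_aux:
  assumes "length p * (length v + 1) + length (takeWhile kA v) = n"
    "\<forall>g\<in>set v. bs g = d" "\<exists>g\<in>set v. \<not> kA g" "fixd (phi_word v) x" "p = pref x (length p)"
  shows "\<exists>k z. fixd (phi_word ((cyc ^^ k) v)) z \<and> R x p z"
  using assms
proof (induct n arbitrary: v x p rule: less_induct)
  case (less n)
  show ?case
  proof (cases "p = []")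
    case True
    then show ?thesis using less(5) R_Nil by (intro exI[of _ 0]) auto
  next
    case pne: False
    obtain g v' where v: "v = g # v'" using less(4) by (cases v) auto
    define y1 where "y1 = img (phi_word v') x"
    have fx: "fixd (phi_word (g # v')) x" using less(5) v by (simp only:)
    have lv: "isimg (phi_gen g) y1 x" "fixd (phi_word (v' @ [g])) y1" "bin y1"
      using level[OF fx] by (simp_all only: y1_def)
    have bx: "bin x" and imx: "isimg (phi_word v) x x" using less(5) by (auto simp: fixd_def)
    have x0le: "x 0 \<le> 1" using bx by (simp add: bin_def)
    have "x 0 = phi_word v (x 0) ! 0" using isimg_first[OF imx nonerasing_phi_word] .
    also have "\<dots> = d" using phi_word_hd_B[OF less(3,4) x0le] .
    finally have x0: "x 0 = bs g" using less(3) v by simp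
    obtain p' where p': "p' = pref y1 (length p')" "occurrences x p = cutp (phi_gen g) y1 ` occurrences y1 p'"
      "kA g \<longrightarrow> p' \<noteq> [] \<and> length p' \<le> length p" "\<not> kA g \<longrightarrow> length p' < length p"
      using DS[OF lv(1) lv(3) pne less(6) x0] by blast
    let ?L = "length v"
    define n' where "n' = length p' * (length (v' @ [g]) + 1) + length (takeWhile kA (v' @ [g]))"
    have lenv: "length (v' @ [g]) = ?L" using v by simp
    have tw_le: "length (takeWhile kA (v' @ [g])) \<le> ?L" using lenv length_takeWhile_le by metis
    have "n' < n"
    proof (cases "kA g")
      case True
      then obtain h where h: "h \<in> set v'" "\<not> kA h" using less(4) v by auto
      have "takeWhile kA (v' @ [g]) = takeWhile kA v'" using takeWhile_append1[of h v' kA, OF h] by simp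
      moreover have "takeWhile kA v = g # takeWhile kA v'" using v True by simp
      moreover have "length p' * (?L + 1) \<le> length p * (?L + 1)" using p'(3) True by (intro mult_le_mono1) simp
      ultimately show ?thesis using less(2) lenv by (simp add: n'_def)
    next
      case False
      then have "Suc (length p') \<le> length p" using p'(4) by simp
      then have "Suc (length p') * (?L + 1) \<le> length p * (?L + 1)" by (rule mult_le_mono1)
      then show ?thesis using less(2) lenv tw_le by (simp add: n'_def)
    qed
    moreover have "\<forall>h\<in>set (v' @ [g]). bs h = d" "\<exists>h\<in>set (v' @ [g]). \<not> kA h" using less(3,4) v by auto
    ultimately obtain k z where kz: "fixd (phi_word ((cyc ^^ k) (v' @ [g]))) z" "R y1 p' z"
      using less(1)[OF _ n'_def[symmetric] _ _ lv(2) p'(1)] by blast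
    have "(cyc ^^ k) (v' @ [g]) = (cyc ^^ Suc k) v" using cyc_Suc[of k v] v by (simp add: cyc_def)
    moreover have "R x p z"
      by (rule R_transfer[OF lv(1) gen_nonerasing injb_gen lv(3) p'(2) kz(2)])
    ultimately show ?thesis using kz(1) by metis
  qed
qed


lemma lemT:
  assumes "\<forall>g\<in>set v. bs g = d" "\<exists>g\<in>set v. \<not> kA g" "fixd (phi_word v) x" "p = pref x (length p)"
  shows "\<exists>k z. fixd (phi_word ((cyc ^^ k) v)) z \<and> R x p z"
  using lemT_aux[OF refl assms] .

lemma map_rotate1: "map f (v' @ [g]) = cyc (map f (g # v'))"
  by (simp add: cyc_def)

lemma phase1_aux:
  assumes "length (takeWhile (\<lambda>g. bs g = c) v) = n"
    "c \<le> 1" "\<forall>g\<in>set v. kA g" "\<exists>g\<in>set v. bs g = c" "\<exists>g\<in>set v. bs g \<noteq> c"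
    "fixd (phi_word v) y" "y 0 = c" "p \<noteq> []" "p = pref y (length p)"
  shows "\<exists>k z. fixd (phi_word ((cyc ^^ k) (map (Gc c) v))) z \<and> R y p z"
  using assms
proof (induct n arbitrary: v y p rule: less_induct)
  case (less n)
  obtain g v' where v: "v = g # v'" using less(5) by (cases v) auto
  define y1 where "y1 = img (phi_word v') y"
  have fx: "fixd (phi_word (g # v')) y" using less(7) v by (simp only:)
  have lv: "isimg (phi_gen g) y1 y" "fixd (phi_word (v' @ [g])) y1" "bin y1"
    using level[OF fx] by (simp_all only: y1_def)
  have kg: "kA g" using less(4) v by simp
  have y10: "y1 0 \<le> 1" using lv(3) by (simp add: bin_def)
  have "y 0 = phi_gen g (y1 0) ! 0" using isimg_first[OF lv(1) gen_nonerasing] .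
  then have y1c: "y1 0 = c" using gen_hdA[OF kg y10] less(8) by simp
  have cyceq: "(cyc ^^ k) (map (Gc c) (v' @ [g])) = (cyc ^^ Suc k) (map (Gc c) v)" for k
    using cyc_Suc[of k "map (Gc c) v"] v map_rotate1[of "Gc c" v' g] by simp
  show ?case
  proof (cases "bs g = c")
    case True
    have x0: "y 0 = bs g" using True less(8) by simp
    obtain p' where p': "p' = pref y1 (length p')" "occurrences y p = cutp (phi_gen g) y1 ` occurrences y1 p'"
      "p' \<noteq> []"
      using DS[OF lv(1) lv(3) less(9) less(10) x0] kg by blast
    obtain h where h: "h \<in> set v'" "bs h \<noteq> c" using less(6) v True by auto
    have "takeWhile (\<lambda>g. bs g = c) (v' @ [g]) = takeWhile (\<lambda>g. bs g = c) v'"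
      using takeWhile_append1[of h v' "\<lambda>g. bs g = c", OF h(1)] h(2) by simp
    moreover have "takeWhile (\<lambda>g. bs g = c) v = g # takeWhile (\<lambda>g. bs g = c) v'" using v True by simp
    ultimately have lt: "length (takeWhile (\<lambda>g. bs g = c) (v' @ [g])) < n" using less(2) by simp
    have "\<forall>g\<in>set (v' @ [g]). kA g" "\<exists>h\<in>set (v' @ [g]). bs h = c" "\<exists>h\<in>set (v' @ [g]). bs h \<noteq> c"
      using less(4) v True h by auto
    then obtain k z where kz: "fixd (phi_word ((cyc ^^ k) (map (Gc c) (v' @ [g])))) z" "R y1 p' z"
      using less(1)[OF lt refl less(3) _ _ _ lv(2) y1c p'(3) p'(1)] by blast
    have "R y p z" by (rule R_transfer[OF lv(1) gen_nonerasing injb_gen lv(3) p'(2) kz(2)])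
    then show ?thesis using kz(1) cyceq by metis
  next
    case False
    define t where "t = (\<lambda>n. y1 (Suc n))"
    have bsg: "bs g = 1 - c" using False less(3) bs_le[of g] by arith
    have imt: "isimg (phi_gen (flipB g)) t y"
      unfolding t_def by (rule conversion[OF kg lv(1)]) (use y1c bsg less(3) in \<open>simp; arith\<close>)
    have bt: "bin t" using lv(3) by (simp add: bin_def t_def)
    have kf: "\<not> kA (flipB g)" using kA_flipB[OF kg] .
    have x0: "y 0 = bs (flipB g)" using bs_flipB[OF kg] bsg less(3,8) by simp
    obtain p' where p': "p' = pref t (length p')" "occurrences y p = cutp (phi_gen (flipB g)) t ` occurrences t p'"
      using DS[OF imt bt less(9) less(10) x0] by blast
    have "isimg (phi_word (map (Gc c) (v' @ [g]))) t t"
      unfolding t_def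
      by (rule tail_word) (use lv(2) less(4) v y1c less(3) in \<open>auto simp: fixd_def\<close>)
    then have ft: "fixd (phi_word (map (Gc c) (v' @ [g]))) t" using bt by (simp add: fixd_def)
    have allbs: "\<forall>h\<in>set (map (Gc c) (v' @ [g])). bs h = 1 - c"
    proof
      fix h assume "h \<in> set (map (Gc c) (v' @ [g]))"
      then obtain h0 where h0: "h0 \<in> set v" "h = Gc c h0" using v by auto
      have "kA h0" using h0 less(4) by auto
      then show "bs h = 1 - c" using h0(2) bs_flipB[of h0] bs_le[of h0] less(3)
        by (auto simp: Gc_def)
    qed
    have someB: "\<exists>h\<in>set (map (Gc c) (v' @ [g])). \<not> kA h"
    proof -
      obtain h0 where h0: "h0 \<in> set v" "bs h0 = c" using less(5) by auto
      then have "Gc c h0 \<in> set (map (Gc c) (v' @ [g]))" using v by auto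
      moreover have "\<not> kA (Gc c h0)" using h0 less(4) kA_flipB by (auto simp: Gc_def)
      ultimately show ?thesis by blast
    qed
    obtain k z where kz: "fixd (phi_word ((cyc ^^ k) (map (Gc c) (v' @ [g])))) z" "R t p' z"
      using lemT[OF allbs someB ft p'(1)] by blast
    have "R y p z" by (rule R_transfer[OF imt gen_nonerasing injb_gen bt p'(2) kz(2)])
    then show ?thesis using kz(1) cyceq by metis
  qed
qed


lemma funpow_single:
  assumes "morph f [c] = [c]" shows "(morph f ^^ k) [c] = [c]"
  by (induct k) (use assms in auto)

lemma primitive_both:
  assumes "set w \<subseteq> {GA, GAl}" "primitive (phi_word w)"
  shows "GA \<in> set w" "GAl \<in> set w"
proof -
  obtain k where k: "k > 0" "\<forall>c\<in>{0,1::nat}. \<forall>d\<in>{0,1::nat}. d \<in> set (((morph (phi_word w)) ^^ k) [c])"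
    using assms(2) by (auto simp: primitive_def)
  show "GA \<in> set w"
  proof (rule ccontr)
    assume "GA \<notin> set w"
    then have "\<forall>g\<in>set w. g = GAl" using assms(1) by auto
    then have "phi_word w 1 = [1]" by (induct w) auto
    then have "(morph (phi_word w) ^^ k) [1] = [1]" by (intro funpow_single) simp
    then show False using k(2) by auto
  qed
  show "GAl \<in> set w"
  proof (rule ccontr)
    assume "GAl \<notin> set w"
    then have "\<forall>g\<in>set w. g = GA" using assms(1) by auto
    then have "phi_word w 0 = [0]" by (induct w) auto
    then have "(morph (phi_word w) ^^ k) [0] = [0]" by (intro funpow_single) simp
    then show False using k(2) by auto
  qed
qed

theorem corollary31:
  fixes w :: "gen list" and u :: "nat \<Rightarrow> nat" and p :: "nat list"
  assumes "set w \<subseteq> {GA, GAl}"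
    and "primitive (phi_word w)"
    and "fixed_point (phi_word w) u"
    and "p \<noteq> []" and "p = pref u (length p)"
  shows "\<exists>f \<in> Cset (map F w) \<union> Cset (map H w). derived_fixed_by u p f"
proof -
  have fu: "fixd (phi_word w) u" using assms(3) fixed_point_iff by blast
  define c where "c = u 0"
  have c1: "c \<le> 1" using fu by (simp add: fixd_def bin_def c_def)
  have both: "GA \<in> set w" "GAl \<in> set w" using primitive_both[OF assms(1,2)] by auto
  have allA: "\<forall>g\<in>set w. kA g" using assms(1) by (auto simp: kA_def)
  have ex1: "\<exists>g\<in>set w. bs g = c" "\<exists>g\<in>set w. bs g \<noteq> c"
    using both c1 by (cases "c = 0"; force simp: bs_def)+
  obtain k z where kz: "fixd (phi_word ((cyc ^^ k) (map (Gc c) w))) z" "R u p z"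
    using phase1_aux[OF refl c1 allA ex1 fu c_def[symmetric] assms(4,5)] by blast
  have mp: "map (Gc c) w = (if c = 1 then map H w else map F w)"
  proof (cases "c = 1")
    case True then show ?thesis using assms(1)
      by (auto intro!: map_cong simp: Gc_def bs_def H_def flipB_def)
  next
    case False then have "c = 0" using c1 by simp
    then show ?thesis using assms(1)
      by (auto intro!: map_cong simp: Gc_def bs_def F_def flipB_def)
  qed
  define f where "f = phi_word ((cyc ^^ k) (map (Gc c) w))"
  have fC: "f \<in> Cset (map F w) \<union> Cset (map H w)"
    unfolding f_def Cset_def mp by auto
  have dfb: "derived_fixed_by u p f"
  proof -
    define \<sigma> where "\<sigma> = (\<lambda>s. z (SOME n. return_seq u p n = s))"
    have rz: "return_seq u p n = return_seq u p m \<longleftrightarrow> z n = z m" for n m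
      using kz(2) by (simp add: R_def)
    have sv: "\<sigma> (return_seq u p n) = z n" for n
    proof -
      have "return_seq u p (SOME m. return_seq u p m = return_seq u p n) = return_seq u p n"
        by (rule someI) (rule refl)
      then show ?thesis unfolding \<sigma>_def using rz by blast
    qed
    have "inj_on \<sigma> (range (return_seq u p))"
      by (auto simp: inj_on_def sv rz)
    moreover have "(\<lambda>n. \<sigma> (return_seq u p n)) = z" by (rule ext) (rule sv)
    ultimately show ?thesis unfolding derived_fixed_by_def
      using kz(1) fixed_point_iff f_def by metis
  qed
  show ?thesis using fC dfb by blast
qed

end
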